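(* Let $T\subseteq\mathcal T_d$ be any subregion and let $U$ be the monomial subregion of $T$ associated to a monomial $x^ay^bz^c$ of degree less than $d$. If $U$ is tileable by lozenges, then $T$ is tileable if and only if $T\setminus U$ is tileable. Moreover, each lozenge tiling of $T$ is obtained by combining a lozenge tiling of $T\setminus U$ and a lozenge tiling of $U$.
   Context: For $d\ge1$, $\mathcal T_d$ is an equilateral triangle of side length $d$ (horizontal bottom side) subdivided into unit triangles, upward ones labeled by the degree $d-1$ monomials of $K[x,y,z]$ and downward ones by degree $d-2$ monomials: $x^{d-1}$ at the top, $y^{d-1}$ bottom-left, $z^{d-1}$ bottom-right, and an upward triangle sharing an edge with a downward one has label equal to the downward label times a variable. A subregion is a set of these unit triangles. The monomial subregion of $T$ associated to a monomial $m$ of degree $<d$ is the set of unit triangles of $T$ whose labels are divisible by $m$ (i.e., the part of $T$ inside the upward triangle located $a$ units from the bottom edge, $b$ from the upper-right edge and $c$ from the upper-left edge when $m=x^ay^bz^c$). A lozenge is a union of two unit triangles sharing an edge; a region is tileable if it is empty or some set of lozenges covers each of its unit triangles exactly once. *)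

theory Defs
  imports Main
begin

text \<open>Unit triangles of T_d, identified by their labels: a monomial x^a y^b z^c is
  represented by its exponent triple (a,b,c).\<close>

datatype utri = Up "nat \<times> nat \<times> nat" | Down "nat \<times> nat \<times> nat"

fun deg :: "nat \<times> nat \<times> nat \<Rightarrow> nat" where
  "deg (a, b, c) = a + b + c"

definition tri_region :: "nat \<Rightarrow> utri set" where
  "tri_region d = {Up m | m. deg m + 1 = d} \<union> {Down m | m. deg m + 2 = d}"

fun label :: "utri \<Rightarrow> nat \<times> nat \<times> nat" where
  "label (Up m) = m"
| "label (Down m) = m"

fun mdvd :: "nat \<times> nat \<times> nat \<Rightarrow> nat \<times> nat \<times> nat \<Rightarrow> bool" where
  "mdvd (a, b, c) (a', b', c') \<longleftrightarrow> a \<le> a' \<and> b \<le> b' \<and> c \<le> c'"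

text \<open>An upward triangle and a downward triangle share an edge iff the upward label
  equals the downward label times a variable.\<close>
definition adjacent :: "nat \<times> nat \<times> nat \<Rightarrow> nat \<times> nat \<times> nat \<Rightarrow> bool" where
  "adjacent u v \<longleftrightarrow> u = (case v of (a, b, c) \<Rightarrow> (Suc a, b, c))
                 \<or> u = (case v of (a, b, c) \<Rightarrow> (a, Suc b, c))
                 \<or> u = (case v of (a, b, c) \<Rightarrow> (a, b, Suc c))"

definition lozenge :: "utri set \<Rightarrow> bool" where
  "lozenge L \<longleftrightarrow> (\<exists>u v. adjacent u v \<and> L = {Up u, Down v})"

definition tiling_of :: "utri set set \<Rightarrow> utri set \<Rightarrow> bool" where
  "tiling_of \<tau> R \<longleftrightarrow> (\<forall>L\<in>\<tau>. lozenge L \<and> L \<subseteq> R)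
      \<and> (\<forall>t\<in>R. \<exists>!L. L \<in> \<tau> \<and> t \<in> L)"

definition tileable :: "utri set \<Rightarrow> bool" where
  "tileable R \<longleftrightarrow> R = {} \<or> (\<exists>\<tau>. tiling_of \<tau> R)"

definition monomial_subregion :: "utri set \<Rightarrow> nat \<times> nat \<times> nat \<Rightarrow> utri set" where
  "monomial_subregion T m = {t \<in> T. mdvd m (label t)}"

end

theory Submission
  imports Defs
begin

lemma tileable_iff: "tileable R \<longleftrightarrow> (\<exists>\<tau>. tiling_of \<tau> R)"
proof -
  have "tiling_of {} {}" unfolding tiling_of_def by simp
  then show ?thesis unfolding tileable_def by blast
qed

definition lz :: "utri set set \<Rightarrow> utri \<Rightarrow> utri set" where
  "lz \<tau> t = (THE L. L \<in> \<tau> \<and> t \<in> L)"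

lemma lz: "tiling_of \<tau> R \<Longrightarrow> t \<in> R \<Longrightarrow> lz \<tau> t \<in> \<tau> \<and> t \<in> lz \<tau> t"
proof -
  assume a: "tiling_of \<tau> R" "t \<in> R"
  then have "\<exists>!L. L \<in> \<tau> \<and> t \<in> L" unfolding tiling_of_def by blast
  then show ?thesis unfolding lz_def by (rule theI')
qed

lemma lz_eq: "tiling_of \<tau> R \<Longrightarrow> L \<in> \<tau> \<Longrightarrow> t \<in> L \<Longrightarrow> lz \<tau> t = L"
proof -
  assume a: "tiling_of \<tau> R" "L \<in> \<tau>" "t \<in> L"
  then have "t \<in> R" unfolding tiling_of_def by blast
  with a have "\<exists>!L. L \<in> \<tau> \<and> t \<in> L" unfolding tiling_of_def by blast
  then show ?thesis unfolding lz_def by (rule the1_equality) (simp add: a(2,3))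
qed

lemma loz_up: "lozenge L \<Longrightarrow> Up u \<in> L \<Longrightarrow> Up u' \<in> L \<Longrightarrow> u = u'"
  unfolding lozenge_def by auto
lemma loz_down: "lozenge L \<Longrightarrow> Down u \<in> L \<Longrightarrow> Down u' \<in> L \<Longrightarrow> u = u'"
  unfolding lozenge_def by auto
lemma loz_ex_up: "lozenge L \<Longrightarrow> \<exists>u. Up u \<in> L"
  unfolding lozenge_def by auto
lemma loz_ex_down: "lozenge L \<Longrightarrow> \<exists>u. Down u \<in> L"
  unfolding lozenge_def by auto

lemma bij_up: assumes "tiling_of \<tau> R" shows "bij_betw (lz \<tau>) (R \<inter> range Up) \<tau>"
proof -
  have inj: "inj_on (lz \<tau>) (R \<inter> range Up)"
  proof (rule inj_onI)
    fix s t assume s: "s \<in> R \<inter> range Up" and t: "t \<in> R \<inter> range Up" and e: "lz \<tau> s = lz \<tau> t"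
    obtain u where u: "s = Up u" using s by auto
    obtain u' where u': "t = Up u'" using t by auto
    have "lz \<tau> s \<in> \<tau>" "s \<in> lz \<tau> s" "t \<in> lz \<tau> t" using lz[OF assms] s t by auto
    moreover have "lozenge (lz \<tau> s)" using calculation assms unfolding tiling_of_def by auto
    ultimately show "s = t" using loz_up u u' e by metis
  qed
  have "lz \<tau> ` (R \<inter> range Up) = \<tau>"
  proof
    show "lz \<tau> ` (R \<inter> range Up) \<subseteq> \<tau>" using lz[OF assms] by auto
    show "\<tau> \<subseteq> lz \<tau> ` (R \<inter> range Up)"
    proof
      fix L assume L: "L \<in> \<tau>"
      then have "lozenge L" "L \<subseteq> R" using assms unfolding tiling_of_def by auto
      then obtain u where "Up u \<in> L" "Up u \<in> R" using loz_ex_up by blast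
      then show "L \<in> lz \<tau> ` (R \<inter> range Up)" using lz_eq[OF assms L] by (metis IntI rangeI image_eqI)
    qed
  qed
  with inj show ?thesis unfolding bij_betw_def by auto
qed

lemma bij_down: assumes "tiling_of \<tau> R" shows "bij_betw (lz \<tau>) (R \<inter> range Down) \<tau>"
proof -
  have inj: "inj_on (lz \<tau>) (R \<inter> range Down)"
  proof (rule inj_onI)
    fix s t assume s: "s \<in> R \<inter> range Down" and t: "t \<in> R \<inter> range Down" and e: "lz \<tau> s = lz \<tau> t"
    obtain u where u: "s = Down u" using s by auto
    obtain u' where u': "t = Down u'" using t by auto
    have "lz \<tau> s \<in> \<tau>" "s \<in> lz \<tau> s" "t \<in> lz \<tau> t" using lz[OF assms] s t by auto
    moreover have "lozenge (lz \<tau> s)" using calculation assms unfolding tiling_of_def by auto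
    ultimately show "s = t" using loz_down u u' e by metis
  qed
  have "lz \<tau> ` (R \<inter> range Down) = \<tau>"
  proof
    show "lz \<tau> ` (R \<inter> range Down) \<subseteq> \<tau>" using lz[OF assms] by auto
    show "\<tau> \<subseteq> lz \<tau> ` (R \<inter> range Down)"
    proof
      fix L assume L: "L \<in> \<tau>"
      then have "lozenge L" "L \<subseteq> R" using assms unfolding tiling_of_def by auto
      then obtain u where "Down u \<in> L" "Down u \<in> R" using loz_ex_down by blast
      then show "L \<in> lz \<tau> ` (R \<inter> range Down)" using lz_eq[OF assms L] by (metis IntI rangeI image_eqI)
    qed
  qed
  with inj show ?thesis unfolding bij_betw_def by auto
qed

lemma finite_tri: "finite (tri_region d)"
proof -
  have "tri_region d \<subseteq> Up ` ({..d} \<times> {..d} \<times> {..d}) \<union> Down ` ({..d} \<times> {..d} \<times> {..d})"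
    unfolding tri_region_def by auto
  moreover have "finite (Up ` ({..d} \<times> {..d} \<times> {..d}) \<union> Down ` ({..d} \<times> {..d} \<times> {..d}))" by auto
  ultimately show ?thesis by (rule finite_subset)
qed

lemma adj_dvd: "adjacent u v \<Longrightarrow> mdvd m v \<Longrightarrow> mdvd m u"
  unfolding adjacent_def by (cases m; cases v; auto)

theorem lemma2p1:
  fixes d a b c :: nat and T :: "utri set"
  assumes "d \<ge> 1"
    and "T \<subseteq> tri_region d"
    and "a + b + c < d"
    and "tileable (monomial_subregion T (a, b, c))"
  shows "(tileable T \<longleftrightarrow> tileable (T - monomial_subregion T (a, b, c)))
       \<and> (\<forall>\<tau>. tiling_of \<tau> T \<longrightarrow>
            (\<exists>\<tau>1 \<tau>2. tiling_of \<tau>1 (T - monomial_subregion T (a, b, c))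
                   \<and> tiling_of \<tau>2 (monomial_subregion T (a, b, c))
                   \<and> \<tau> = \<tau>1 \<union> \<tau>2))"
proof -
  define U where "U = monomial_subregion T (a, b, c)"
  have finT: "finite T" using assms(2) finite_tri finite_subset by blast
  have UT: "U \<subseteq> T" unfolding U_def monomial_subregion_def by auto
  have finU: "finite U" using finT UT finite_subset by blast
  obtain \<sigma> where \<sigma>: "tiling_of \<sigma> U" using assms(4) tileable_iff U_def by auto
  have cardU: "card (U \<inter> range Up) = card (U \<inter> range Down)"
    using bij_betw_same_card[OF bij_up[OF \<sigma>]] bij_betw_same_card[OF bij_down[OF \<sigma>]] by simp
  have clos: "Up u \<in> U" if "Down v \<in> U" "adjacent u v" "Up u \<in> T" for u v
    using that adj_dvd unfolding U_def monomial_subregion_def by auto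
  have split: "\<exists>\<tau>1 \<tau>2. tiling_of \<tau>1 (T - U) \<and> tiling_of \<tau>2 U \<and> \<tau> = \<tau>1 \<union> \<tau>2"
    if \<tau>: "tiling_of \<tau> T" for \<tau>
  proof -
    have loz: "lozenge L" "L \<subseteq> T" if "L \<in> \<tau>" for L using \<tau> that unfolding tiling_of_def by auto
    have injU: "inj_on (lz \<tau>) (U \<inter> range Up)"
      using bij_up[OF \<tau>] UT unfolding bij_betw_def by (meson Int_mono inj_on_subset order_refl)
    have injD: "inj_on (lz \<tau>) (U \<inter> range Down)"
      using bij_down[OF \<tau>] UT unfolding bij_betw_def by (meson Int_mono inj_on_subset order_refl)
    have sub: "lz \<tau> ` (U \<inter> range Down) \<subseteq> lz \<tau> ` (U \<inter> range Up)"
    proof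
      fix L assume "L \<in> lz \<tau> ` (U \<inter> range Down)"
      then obtain v where v: "Down v \<in> U" "L = lz \<tau> (Down v)" by auto
      then have L: "L \<in> \<tau>" "Down v \<in> L" using lz[OF \<tau>] UT by auto
      then obtain u v' where uv: "adjacent u v'" "L = {Up u, Down v'}" using loz(1) unfolding lozenge_def by blast
      then have "v' = v" using L by auto
      have "Up u \<in> T" using loz(2)[OF L(1)] uv by auto
      then have "Up u \<in> U" using clos v uv \<open>v' = v\<close> by auto
      moreover have "lz \<tau> (Up u) = L" using lz_eq[OF \<tau> L(1)] uv by auto
      ultimately show "L \<in> lz \<tau> ` (U \<inter> range Up)" by (metis IntI rangeI image_eqI)
    qed
    have eqimg: "lz \<tau> ` (U \<inter> range Down) = lz \<tau> ` (U \<inter> range Up)"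
      apply (rule card_subset_eq)
      using finU sub card_image[OF injU] card_image[OF injD] cardU by auto
    have dich: "L \<subseteq> U \<or> L \<inter> U = {}" if L: "L \<in> \<tau>" for L
    proof -
      obtain u v where uv: "adjacent u v" "L = {Up u, Down v}" using loz(1)[OF L] unfolding lozenge_def by blast
      have uT: "Up u \<in> T" using loz(2)[OF L] uv by auto
      show ?thesis
      proof (cases "Down v \<in> U")
        case True then show ?thesis using clos uv uT by auto
      next
        case False
        show ?thesis
        proof (cases "Up u \<in> U")
          case True
          have "lz \<tau> (Up u) = L" using lz_eq[OF \<tau> L] uv by auto
          moreover have "lz \<tau> (Up u) \<in> lz \<tau> ` (U \<inter> range Down)" using True eqimg by auto
          then obtain w where w: "Down w \<in> U" "lz \<tau> (Down w) = lz \<tau> (Up u)" by auto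
          moreover have "Down w \<in> lz \<tau> (Down w)" using lz[OF \<tau>] w UT by auto
          ultimately have "Down w \<in> L" by simp
          then have "w = v" using uv by auto
          then show ?thesis using w False by auto
        next
          case False2: False
          then show ?thesis using False uv by auto
        qed
      qed
    qed
    define \<tau>1 where "\<tau>1 = {L \<in> \<tau>. L \<inter> U = {}}"
    define \<tau>2 where "\<tau>2 = {L \<in> \<tau>. L \<subseteq> U}"
    have "\<tau> = \<tau>1 \<union> \<tau>2" using dich unfolding \<tau>1_def \<tau>2_def by auto
    moreover have "tiling_of \<tau>1 (T - U)"
      unfolding tiling_of_def
    proof (intro conjI ballI)
      fix L assume "L \<in> \<tau>1" then show "lozenge L" "L \<subseteq> T - U" using loz unfolding \<tau>1_def by auto
    next
      fix t assume t: "t \<in> T - U"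
      then have L: "lz \<tau> t \<in> \<tau>" "t \<in> lz \<tau> t" using lz[OF \<tau>] by auto
      have L1: "lz \<tau> t \<in> \<tau>1" using dich[OF L(1)] L t unfolding \<tau>1_def by auto
      show "\<exists>!L. L \<in> \<tau>1 \<and> t \<in> L"
      proof (rule ex1I[of _ "lz \<tau> t"])
        show "lz \<tau> t \<in> \<tau>1 \<and> t \<in> lz \<tau> t" using L1 L by simp
      next
        fix L' assume "L' \<in> \<tau>1 \<and> t \<in> L'"
        then show "L' = lz \<tau> t" using lz_eq[OF \<tau>, of L' t] unfolding \<tau>1_def by simp
      qed
    qed
    moreover have "tiling_of \<tau>2 U"
      unfolding tiling_of_def
    proof (intro conjI ballI)
      fix L assume "L \<in> \<tau>2" then show "lozenge L" "L \<subseteq> U" using loz unfolding \<tau>2_def by auto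
    next
      fix t assume t: "t \<in> U"
      then have L: "lz \<tau> t \<in> \<tau>" "t \<in> lz \<tau> t" using lz[OF \<tau>] UT by auto
      have L1: "lz \<tau> t \<in> \<tau>2" using dich[OF L(1)] L t unfolding \<tau>2_def by auto
      show "\<exists>!L. L \<in> \<tau>2 \<and> t \<in> L"
      proof (rule ex1I[of _ "lz \<tau> t"])
        show "lz \<tau> t \<in> \<tau>2 \<and> t \<in> lz \<tau> t" using L1 L by simp
      next
        fix L' assume "L' \<in> \<tau>2 \<and> t \<in> L'"
        then show "L' = lz \<tau> t" using lz_eq[OF \<tau>, of L' t] unfolding \<tau>2_def by simp
      qed
    qed
    ultimately show ?thesis by blast
  qed
  have backw: "tileable T" if "tiling_of \<sigma>1 (T - U)" for \<sigma>1
  proof -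
    have "tiling_of (\<sigma>1 \<union> \<sigma>) T"
      unfolding tiling_of_def
    proof (intro conjI ballI)
      fix L assume LL: "L \<in> \<sigma>1 \<union> \<sigma>"
      have A: "\<forall>L\<in>\<sigma>1. lozenge L \<and> L \<subseteq> T - U" using that unfolding tiling_of_def by (rule conjunct1)
      have B: "\<forall>L\<in>\<sigma>. lozenge L \<and> L \<subseteq> U" using \<sigma> unfolding tiling_of_def by (rule conjunct1)
      show "lozenge L" "L \<subseteq> T" using LL A B UT by auto
    next
      fix t assume t: "t \<in> T"
      show "\<exists>!L. L \<in> \<sigma>1 \<union> \<sigma> \<and> t \<in> L"
      proof (cases "t \<in> U")
        case True
        then have L: "lz \<sigma> t \<in> \<sigma>" "t \<in> lz \<sigma> t" using lz[OF \<sigma>] by auto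
        have n1: "\<forall>L'. L' \<in> \<sigma>1 \<longrightarrow> t \<notin> L'" using that True unfolding tiling_of_def by auto
        show ?thesis
        proof (rule ex1I[of _ "lz \<sigma> t"])
          show "lz \<sigma> t \<in> \<sigma>1 \<union> \<sigma> \<and> t \<in> lz \<sigma> t" using L by simp
        next
          fix L' assume "L' \<in> \<sigma>1 \<union> \<sigma> \<and> t \<in> L'"
          then show "L' = lz \<sigma> t" using n1 lz_eq[OF \<sigma>, of L' t] by auto
        qed
      next
        case False
        then have L: "lz \<sigma>1 t \<in> \<sigma>1" "t \<in> lz \<sigma>1 t" using lz[OF that] t by auto
        have n1: "\<forall>L'. L' \<in> \<sigma> \<longrightarrow> t \<notin> L'" using \<sigma> False unfolding tiling_of_def by auto
        show ?thesis
        proof (rule ex1I[of _ "lz \<sigma>1 t"])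
          show "lz \<sigma>1 t \<in> \<sigma>1 \<union> \<sigma> \<and> t \<in> lz \<sigma>1 t" using L by simp
        next
          fix L' assume "L' \<in> \<sigma>1 \<union> \<sigma> \<and> t \<in> L'"
          then show "L' = lz \<sigma>1 t" using n1 lz_eq[OF that, of L' t] by auto
        qed
      qed
    qed
    then show ?thesis using tileable_iff by blast
  qed
  have "tileable T \<longleftrightarrow> tileable (T - U)"
  proof
    assume "tileable T"
    then obtain \<tau> where "tiling_of \<tau> T" using tileable_iff by blast
    then obtain \<tau>1 where "tiling_of \<tau>1 (T - U)" using split by blast
    then show "tileable (T - U)" using tileable_iff by blast
  next
    assume "tileable (T - U)"
    then obtain \<tau>1 where "tiling_of \<tau>1 (T - U)" using tileable_iff by blast
    then show "tileable T" by (rule backw)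
  qed
  then show ?thesis
    unfolding U_def[symmetric] using split by blast
qed

end
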